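(* Let $P$ be any finite poset. For $x\in P$ let $C(x)$ be the size of the largest chain containing $x$ and $A(x)$ the size of the largest antichain containing $x$. Then \[ \sum_{x\in P}\frac{1}{A(x)\,C(x)}\le 1. \]
   Context: A chain in a poset is a set of pairwise comparable elements; an antichain is a set of pairwise incomparable elements. *)

theory Defs
  imports Complex_Main
begin

definition is_chain :: "'a set \<Rightarrow> 'a rel \<Rightarrow> 'a set \<Rightarrow> bool" where
  "is_chain P r S \<longleftrightarrow> S \<subseteq> P \<and> (\<forall>x\<in>S. \<forall>y\<in>S. (x, y) \<in> r \<or> (y, x) \<in> r)"

definition is_antichain :: "'a set \<Rightarrow> 'a rel \<Rightarrow> 'a set \<Rightarrow> bool" where
  "is_antichain P r S \<longleftrightarrow> S \<subseteq> P \<and>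
     (\<forall>x\<in>S. \<forall>y\<in>S. x \<noteq> y \<longrightarrow> (x, y) \<notin> r \<and> (y, x) \<notin> r)"

definition max_chain_through :: "'a set \<Rightarrow> 'a rel \<Rightarrow> 'a \<Rightarrow> nat" where
  "max_chain_through P r x = Max {card S | S. is_chain P r S \<and> x \<in> S}"

definition max_antichain_through :: "'a set \<Rightarrow> 'a rel \<Rightarrow> 'a \<Rightarrow> nat" where
  "max_antichain_through P r x = Max {card S | S. is_antichain P r S \<and> x \<in> S}"

end

theory Submission
  imports Defs
begin

definition tb :: "'a set \<Rightarrow> 'a rel \<Rightarrow> 'a \<Rightarrow> nat" where
  "tb P r x = Max {card S | S. is_chain P r S \<and> x \<in> S \<and> (\<forall>y\<in>S. (y,x) \<in> r)}"

lemma fin_cards: "finite P \<Longrightarrow> finite {card S | S. S \<subseteq> P \<and> Q S}"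
proof -
  assume "finite P"
  have "{card S | S. S \<subseteq> P \<and> Q S} \<subseteq> card ` Pow P" by auto
  thus ?thesis using \<open>finite P\<close> finite_subset by blast
qed

lemma max_ge:
  assumes "finite P" "S \<subseteq> P" "Q S"
  shows "card S \<le> Max {card S | S. S \<subseteq> P \<and> Q S}"
  using fin_cards[OF assms(1)] assms by (intro Max_ge) auto

lemma max_ex:
  assumes "finite P" "S0 \<subseteq> P" "Q S0"
  shows "\<exists>S. S \<subseteq> P \<and> Q S \<and> card S = Max {card S | S. S \<subseteq> P \<and> Q S}"
proof -
  have "Max {card S | S. S \<subseteq> P \<and> Q S} \<in> {card S | S. S \<subseteq> P \<and> Q S}"
    using fin_cards[OF assms(1)] assms by (intro Max_in) auto
  thus ?thesis by auto
qed

lemma C_alt: "max_chain_through P r x = Max {card S | S. S \<subseteq> P \<and> (is_chain P r S \<and> x \<in> S)}"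
  unfolding max_chain_through_def is_chain_def by (intro arg_cong[where f=Max]) auto

lemma A_alt: "max_antichain_through P r x = Max {card S | S. S \<subseteq> P \<and> (is_antichain P r S \<and> x \<in> S)}"
  unfolding max_antichain_through_def is_antichain_def by (intro arg_cong[where f=Max]) auto

lemma t_alt: "tb P r x = Max {card S | S. S \<subseteq> P \<and> (is_chain P r S \<and> x \<in> S \<and> (\<forall>y\<in>S. (y,x) \<in> r))}"
  unfolding tb_def is_chain_def by (intro arg_cong[where f=Max]) auto

lemma C_ge: "finite P \<Longrightarrow> is_chain P r S \<Longrightarrow> x \<in> S \<Longrightarrow> card S \<le> max_chain_through P r x"
  unfolding C_alt by (rule max_ge) (auto simp: is_chain_def)

lemma A_ge: "finite P \<Longrightarrow> is_antichain P r S \<Longrightarrow> x \<in> S \<Longrightarrow> card S \<le> max_antichain_through P r x"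
  unfolding A_alt by (rule max_ge) (auto simp: is_antichain_def)

lemma t_ge: "finite P \<Longrightarrow> is_chain P r S \<Longrightarrow> x \<in> S \<Longrightarrow> \<forall>y\<in>S. (y,x) \<in> r \<Longrightarrow> card S \<le> tb P r x"
  unfolding t_alt by (rule max_ge) (auto simp: is_chain_def)

context
  fixes P :: "'a set" and r :: "'a rel"
  assumes fin: "finite P" and po: "partial_order_on P r"
begin

lemma refl': "x \<in> P \<Longrightarrow> (x,x) \<in> r"
  using po unfolding partial_order_on_def preorder_on_def refl_on_def by blast

lemma trans': "(x,y) \<in> r \<Longrightarrow> (y,z) \<in> r \<Longrightarrow> (x,z) \<in> r"
  using po unfolding partial_order_on_def preorder_on_def trans_def by blast

lemma antisym': "(x,y) \<in> r \<Longrightarrow> (y,x) \<in> r \<Longrightarrow> x = y"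
  using po unfolding partial_order_on_def antisym_def by blast

lemma single_chain: "x \<in> P \<Longrightarrow> is_chain P r {x}"
  using refl' by (auto simp: is_chain_def)

lemma A_pos: "x \<in> P \<Longrightarrow> max_antichain_through P r x \<ge> 1"
  using A_ge[OF fin, of r "{x}" x] by (auto simp: is_antichain_def)

lemma C_pos: "x \<in> P \<Longrightarrow> max_chain_through P r x \<ge> 1"
  using C_ge[OF fin single_chain, of x x] by auto

lemma t_ex: "x \<in> P \<Longrightarrow> \<exists>S. is_chain P r S \<and> x \<in> S \<and> (\<forall>y\<in>S. (y,x) \<in> r) \<and> card S = tb P r x"
proof -
  assume x: "x \<in> P"
  have "\<exists>S. S \<subseteq> P \<and> (is_chain P r S \<and> x \<in> S \<and> (\<forall>y\<in>S. (y,x) \<in> r)) \<and> card S = tb P r x"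
    unfolding t_alt by (rule max_ex[OF fin, of "{x}"]) (use x single_chain refl' in auto)
  thus ?thesis by blast
qed

lemma C_ex: "x \<in> P \<Longrightarrow> \<exists>S. is_chain P r S \<and> x \<in> S \<and> card S = max_chain_through P r x"
proof -
  assume x: "x \<in> P"
  have "\<exists>S. S \<subseteq> P \<and> (is_chain P r S \<and> x \<in> S) \<and> card S = max_chain_through P r x"
    unfolding C_alt by (rule max_ex[OF fin, of "{x}"]) (use x single_chain in auto)
  thus ?thesis by blast
qed

lemma t_pos: "x \<in> P \<Longrightarrow> tb P r x \<ge> 1"
  using t_ge[OF fin single_chain, of x x] refl' by auto

lemma t_le_C: "x \<in> P \<Longrightarrow> tb P r x \<le> max_chain_through P r x"
  using t_ex C_ge[OF fin] by metis

lemma t_step: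
  assumes x: "x \<in> P" and y: "y \<in> P" and xy: "(x,y) \<in> r" "x \<noteq> y"
  shows "tb P r y \<ge> tb P r x + 1"
proof -
  obtain S where S: "is_chain P r S" "x \<in> S" "\<forall>z\<in>S. (z,x) \<in> r" "card S = tb P r x"
    using t_ex[OF x] by blast
  have fS: "finite S" using S(1) fin finite_subset unfolding is_chain_def by blast
  have yS: "y \<notin> S" using S(3) xy antisym' by blast
  have ch: "is_chain P r (insert y S)"
    using S(1,3) y xy trans' refl' unfolding is_chain_def by blast
  have "card (insert y S) \<le> tb P r y"
    by (rule t_ge[OF fin ch]) (use S(3) xy trans' refl'[OF y] in auto)
  thus ?thesis using yS fS S(4) by simp
qed

lemma C_step:
  assumes x: "x \<in> P" and y: "y \<in> P" and xy: "(x,y) \<in> r" "x \<noteq> y"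
  shows "max_chain_through P r x + tb P r y \<ge> max_chain_through P r y + tb P r x + 1"
proof -
  obtain S where S: "is_chain P r S" "x \<in> S" "\<forall>z\<in>S. (z,x) \<in> r" "card S = tb P r x"
    using t_ex[OF x] by blast
  obtain K where K: "is_chain P r K" "y \<in> K" "card K = max_chain_through P r y"
    using C_ex[OF y] by blast
  define K1 where "K1 = {z\<in>K. (z,y) \<in> r}"
  define K2 where "K2 = {z\<in>K. (y,z) \<in> r \<and> z \<noteq> y}"
  have fK: "finite K" using K(1) fin finite_subset unfolding is_chain_def by blast
  have fS: "finite S" using S(1) fin finite_subset unfolding is_chain_def by blast
  have KU: "K = K1 \<union> K2" using K(1,2) unfolding K1_def K2_def is_chain_def by blast
  have Kd: "K1 \<inter> K2 = {}" unfolding K1_def K2_def using antisym' by blast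
  have "card K = card K1 + card K2" using KU Kd fK
    by (metis card_Un_disjoint finite_Un)
  moreover have "card K1 \<le> tb P r y"
    by (rule t_ge[OF fin]) (use K(1,2) refl'[OF y] in \<open>auto simp: K1_def is_chain_def\<close>)
  ultimately have c2: "card K2 + tb P r y \<ge> max_chain_through P r y" using K(3) by linarith
  define T where "T = S \<union> insert y K2"
  have Tsub: "T \<subseteq> P" using S(1) K(1) y unfolding T_def K2_def is_chain_def by blast
  have lo: "\<forall>z\<in>S. (z,y) \<in> r" using S(3) xy(1) trans' by blast
  have hi: "\<forall>z\<in>K2. (y,z) \<in> r" unfolding K2_def by blast
  have ch: "is_chain P r T"
    unfolding is_chain_def
  proof (intro conjI Tsub ballI)
    fix u v assume u: "u \<in> T" and v: "v \<in> T"
    show "(u, v) \<in> r \<or> (v, u) \<in> r"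
    proof -
      have Sc: "\<forall>u\<in>S. \<forall>v\<in>S. (u, v) \<in> r \<or> (v, u) \<in> r" using S(1) unfolding is_chain_def by blast
      have Kc: "\<forall>u\<in>K2. \<forall>v\<in>K2. (u, v) \<in> r \<or> (v, u) \<in> r" using K(1) unfolding is_chain_def K2_def by blast
      consider "u \<in> S" | "u = y" | "u \<in> K2" using u T_def by blast
      thus ?thesis
      proof cases
        case 1
        consider "v \<in> S" | "v = y" | "v \<in> K2" using v T_def by blast
        thus ?thesis
          by cases (use 1 Sc lo hi trans' in blast)+
      next
        case 2
        consider "v \<in> S" | "v = y" | "v \<in> K2" using v T_def by blast
        thus ?thesis
          by cases (use 2 lo hi refl'[OF y] in blast)+
      next
        case 3
        consider "v \<in> S" | "v = y" | "v \<in> K2" using v T_def by blast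
        thus ?thesis
          by cases (use 3 Kc lo hi trans' in blast)+
      qed
    qed
  qed
  have "card T \<le> max_chain_through P r x"
    by (rule C_ge[OF fin ch]) (use S(2) in \<open>auto simp: T_def\<close>)
  moreover have "S \<inter> insert y K2 = {}"
  proof -
    { fix z assume z: "z \<in> S" "z \<in> insert y K2"
      have "(z,x) \<in> r" using S(3) z by blast
      moreover have "(y,z) \<in> r" using z(2) refl'[OF y] unfolding K2_def by blast
      ultimately have "(y,x) \<in> r" using trans' by blast
      hence False using xy antisym' by blast }
    thus ?thesis by blast
  qed
  moreover have "y \<notin> K2" unfolding K2_def by blast
  moreover have "finite K2" using fK unfolding K2_def by simp
  ultimately have "card S + 1 + card K2 \<le> max_chain_through P r x"
    unfolding T_def using fS by (simp add: card_Un_disjoint)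
  thus ?thesis using c2 S(4) by linarith
qed

lemma key_ineq:
  fixes a cx c cy :: nat
  assumes "a \<ge> 1" "c \<ge> a + 1" "cx + c \<ge> cy + a + 1" "c \<le> cy"
  shows "a * cy \<le> (c - 1) * cx"
proof -
  have "a * (cy - (c - 1)) \<le> (c - 1) * (cx - a)"
    by (rule mult_mono) (use assms in auto)
  hence "a * (c - 1) + a * (cy - (c - 1)) \<le> a * (c - 1) + (c - 1) * (cx - a)" by simp
  moreover have e1: "(c - 1) + (cy - (c - 1)) = cy" using assms by simp
  moreover have e2: "a + (cx - a) = cx" using assms by simp
  moreover have "a * (c - 1) + a * (cy - (c - 1)) = a * cy"
    by (metis e1 add_mult_distrib2)
  moreover have "a * (c - 1) + (c - 1) * (cx - a) = (c - 1) * cx"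
    by (metis e2 add_mult_distrib2 mult.commute)
  ultimately show ?thesis by simp
qed

end

theorem corollary10:
  fixes P :: "'a set" and r :: "'a rel"
  assumes "finite P" and "partial_order_on P r"
  shows "(\<Sum>x\<in>P. 1 / (real (max_antichain_through P r x) * real (max_chain_through P r x))) \<le> 1"
proof -
  note fin = assms(1) and po = assms(2)
  define C where "C = max_chain_through P r"
  define A where "A = max_antichain_through P r"
  define t where "t = tb P r"
  define M where "M = (\<Prod>x\<in>P. C x)"
  define q where "q x = M div C x" for x
  define I where "I x = {(t x - 1) * q x ..< t x * q x}" for x
  have Cpos: "x \<in> P \<Longrightarrow> C x \<ge> 1" for x using C_pos[OF fin po] C_def by blast
  have Apos: "x \<in> P \<Longrightarrow> A x \<ge> 1" for x using A_pos[OF fin po] A_def by blast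
  have tpos: "x \<in> P \<Longrightarrow> t x \<ge> 1" for x using t_pos[OF fin po] t_def by blast
  have tC: "x \<in> P \<Longrightarrow> t x \<le> C x" for x using t_le_C[OF fin po] t_def C_def by blast
  have Mpos: "M > 0" unfolding M_def using Cpos fin
    by (intro prod_pos) (simp add: Suc_le_eq)
  have Cq: "x \<in> P \<Longrightarrow> C x * q x = M" for x
    unfolding q_def M_def using fin by (simp add: dvd_prodI)
  have qpos: "x \<in> P \<Longrightarrow> q x > 0" for x using Cq Mpos
    by (metis gr0I mult_0_right not_less_zero)
  have cardI: "x \<in> P \<Longrightarrow> card (I x) = q x" for x
  proof -
    assume x: "x \<in> P"
    have "t x * q x = (t x - 1) * q x + q x" using tpos[OF x]
      by (metis add.commute le_add_diff_inverse mult_Suc plus_1_eq_Suc)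
    thus ?thesis unfolding I_def by simp
  qed
  have Isub: "x \<in> P \<Longrightarrow> I x \<subseteq> {..<M}" for x
  proof -
    assume x: "x \<in> P"
    have "t x * q x \<le> C x * q x" using tC[OF x] by simp
    thus ?thesis unfolding I_def using Cq[OF x] by (auto intro: less_le_trans)
  qed
  have sep: "t x * q x \<le> (t y - 1) * q y"
    if x: "x \<in> P" and y: "y \<in> P" and xy: "(x,y) \<in> r" "x \<noteq> y" for x y
  proof -
    have k: "t x * C y \<le> (t y - 1) * C x"
      unfolding t_def C_def
      by (rule key_ineq[OF fin po]) (use t_pos[OF fin po x] t_step[OF fin po x y xy] C_step[OF fin po x y xy]
            t_le_C[OF fin po y] in auto)
    hence "(t x * C y) * (q x * q y) \<le> ((t y - 1) * C x) * (q x * q y)" by simp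
    hence "(t x * q x) * (C y * q y) \<le> ((t y - 1) * q y) * (C x * q x)"
      by (simp add: ac_simps)
    hence "(t x * q x) * M \<le> ((t y - 1) * q y) * M" using Cq x y by simp
    thus ?thesis using Mpos by simp
  qed
  have disj: "\<not> (k \<in> I x \<and> k \<in> I y)"
    if x: "x \<in> P" and y: "y \<in> P" and xy: "(x,y) \<in> r" "x \<noteq> y" for x y k
    using sep[OF x y xy] unfolding I_def by auto
  define S where "S k = {x\<in>P. k \<in> I x}" for k
  have Santi: "is_antichain P r (S k)" for k
    unfolding is_antichain_def S_def using disj by blast
  have finS: "finite (S k)" for k using fin unfolding S_def by simp
  have inner: "(\<Sum>x\<in>S k. 1 / (real M * real (A x))) \<le> 1 / real M" for k
  proof (cases "S k = {}")
    case True thus ?thesis by simp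
  next
    case False
    hence cpos: "card (S k) > 0" using finS by (simp add: card_gt_0_iff)
    have "(\<Sum>x\<in>S k. 1 / (real M * real (A x))) \<le> (\<Sum>x\<in>S k. 1 / (real M * real (card (S k))))"
    proof (rule sum_mono)
      fix x assume xs: "x \<in> S k"
      have "card (S k) \<le> A x" unfolding A_def by (rule A_ge[OF fin Santi xs])
      thus "1 / (real M * real (A x)) \<le> 1 / (real M * real (card (S k)))"
        using cpos Mpos by (intro divide_left_mono mult_left_mono) auto
    qed
    also have "\<dots> = 1 / real M" using cpos by simp
    finally show ?thesis .
  qed
  have "(\<Sum>x\<in>P. 1 / (real (A x) * real (C x)))
      = (\<Sum>x\<in>P. \<Sum>k<M. if k \<in> I x then 1 / (real M * real (A x)) else 0)"
  proof (rule sum.cong[OF refl])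
    fix x assume x: "x \<in> P"
    have "(\<Sum>k<M. if k \<in> I x then 1 / (real M * real (A x)) else 0)
        = real (card ({..<M} \<inter> I x)) * (1 / (real M * real (A x)))"
      by (simp add: sum.If_cases)
    also have "{..<M} \<inter> I x = I x" using Isub[OF x] by blast
    also have "real (card (I x)) * (1 / (real M * real (A x))) = 1 / (real (A x) * real (C x))"
    proof -
      have rM: "real M = real (C x) * real (q x)" by (metis Cq[OF x] of_nat_mult)
      show ?thesis using cardI[OF x] qpos[OF x] unfolding rM by simp
    qed
    finally show "1 / (real (A x) * real (C x)) = (\<Sum>k<M. if k \<in> I x then 1 / (real M * real (A x)) else 0)" by simp
  qed
  also have "\<dots> = (\<Sum>k<M. \<Sum>x\<in>P. if k \<in> I x then 1 / (real M * real (A x)) else 0)"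
    by (rule sum.swap)
  also have "\<dots> = (\<Sum>k<M. \<Sum>x\<in>S k. 1 / (real M * real (A x)))"
    unfolding S_def using fin by (simp add: sum.inter_filter)
  also have "\<dots> \<le> (\<Sum>k<M. 1 / real M)" by (rule sum_mono) (rule inner)
  also have "\<dots> = 1" using Mpos by simp
  finally show ?thesis unfolding A_def C_def .
qed

end
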